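(* If a spherical curve $P$ has a trigon of type D, then $r(P)\le 4$.
   Context: A spherical curve is a smooth immersion $P:S^1\to S^2$ whose self-intersections are finitely many transverse double points, called crossings. It is oriented and has at least one crossing. Regions are the components of $S^2\setminus P(S^1)$, and edges are the arcs of the curve between consecutive crossings. A trigon is a region bounded by three edges. The Gauss word is the cyclic word of crossings met in one traversal of the curve; each crossing appears twice. Crossings $a,b$ are interlaced if their occurrences alternate $a\dots b\dots a\dots b$ in the cyclic word, i.e., their chords cross in the chord diagram. Let a trigon have crossings $x,y,z$. Each of its three edges gives a block of two consecutive letters in the Gauss word, one block on each of $\{x,y\}$, $\{y,z\}$, $\{z,x\}$, so the word has the form $B_1W_1B_2W_2B_3W_3$ with the $W_i$ free of $x,y,z$. The trigon's type is determined by how many of the three pairs among $x,y,z$ are interlaced: type A if exactly two pairs are interlaced; type B if exactly one; type C if all three (e.g. $xy\,W_1\,zx\,W_2\,yz\,W_3$, as in the trefoil curve); type D if none (e.g. $xy\,W_1\,yz\,W_2\,zx\,W_3$). A crossing is reducible if no crossing is interlaced with it; equivalently, only three distinct regions meet at it. $P$ is reducible if it has a reducible crossing. The inverse-half-twisted splice $I$ at a crossing $p$ takes the curve with cyclic Gauss word $p\,A\,p\,B$ to the curve with Gauss word $\overline{A}\,B$, where $\overline{A}$ is $A$ reversed. Geometrically, $p$ is smoothed in the unique way giving a single closed curve, and the result is re-oriented. The reductivity $r(P)$ is the minimal number of successive applications of $I$ needed to reach a reducible spherical curve; $r(P)=0$ if $P$ is reducible. *)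

theory Defs
  imports Main "HOL-Library.Extended_Nat"
begin

text \<open>Combinatorial model of an oriented spherical curve (up to orientation-preserving
homeomorphism of the sphere).  A curve with n crossings is given by its Gauss word
w (a list of length 2n over crossing labels, each label occurring exactly twice;
position i of the list is the i-th passage through a crossing) together with a
local orientation datum eps on passages: eps i holds iff, at the crossing passed at
position i, the other strand (passage partner w i) crosses the strand of passage i
from its right to its left.  Edge e (e < length w) is the arc from passage e to
passage (e+1) mod length w.  A dart (e, b) is edge e traversed forwards (b = True)
or backwards (b = False), with the adjacent region on its left; face_next is the
face-tracing permutation, whose orbits are the regions.  The data come from a curve
on the sphere iff the number of regions is n + 2 (Euler characteristic 2).\<close>

definition gauss_word :: "nat list \<Rightarrow> bool" where
  "gauss_word w \<longleftrightarrow> w \<noteq> [] \<and> (\<forall>c \<in> set w. count_list w c = 2)"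

definition partner :: "nat list \<Rightarrow> nat \<Rightarrow> nat" where
  "partner w i = (THE j. j < length w \<and> j \<noteq> i \<and> w ! j = w ! i)"

definition arrive :: "nat list \<Rightarrow> nat \<times> bool \<Rightarrow> nat" where
  "arrive w d = (if snd d then Suc (fst d) mod length w else fst d)"

definition face_next :: "nat list \<Rightarrow> (nat \<Rightarrow> bool) \<Rightarrow> nat \<times> bool \<Rightarrow> nat \<times> bool" where
  "face_next w eps d =
     (let p = arrive w d; q = partner w p in
      if snd d = eps p then (q, True) else ((q + length w - 1) mod length w, False))"

definition darts :: "nat list \<Rightarrow> (nat \<times> bool) set" where
  "darts w = {0..<length w} \<times> UNIV"

definition face :: "nat list \<Rightarrow> (nat \<Rightarrow> bool) \<Rightarrow> nat \<times> bool \<Rightarrow> (nat \<times> bool) set" where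
  "face w eps d = {(face_next w eps ^^ k) d | k. True}"

definition faces :: "nat list \<Rightarrow> (nat \<Rightarrow> bool) \<Rightarrow> (nat \<times> bool) set set" where
  "faces w eps = face w eps ` darts w"

definition spherical_curve :: "nat list \<Rightarrow> (nat \<Rightarrow> bool) \<Rightarrow> bool" where
  "spherical_curve w eps \<longleftrightarrow>
     gauss_word w
   \<and> (\<forall>i < length w. eps (partner w i) = (\<not> eps i))
   \<and> card (faces w eps) = length w div 2 + 2"

text \<open>Chords of a and b cross in the chord diagram of the cyclic word.\<close>
definition interlaced :: "nat list \<Rightarrow> nat \<Rightarrow> nat \<Rightarrow> bool" where
  "interlaced w a b \<longleftrightarrow> a \<noteq> b \<and>
     ((\<exists>i1 j1 i2 j2. i1 < j1 \<and> j1 < i2 \<and> i2 < j2 \<and> j2 < length w \<and>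
        w ! i1 = a \<and> w ! j1 = b \<and> w ! i2 = a \<and> w ! j2 = b) \<or>
      (\<exists>i1 j1 i2 j2. i1 < j1 \<and> j1 < i2 \<and> i2 < j2 \<and> j2 < length w \<and>
        w ! i1 = b \<and> w ! j1 = a \<and> w ! i2 = b \<and> w ! j2 = a))"

definition trigon :: "nat list \<Rightarrow> (nat \<Rightarrow> bool) \<Rightarrow> (nat \<times> bool) set \<Rightarrow> bool" where
  "trigon w eps F \<longleftrightarrow> F \<in> faces w eps \<and> card F = 3"

definition corners :: "nat list \<Rightarrow> (nat \<times> bool) set \<Rightarrow> nat set" where
  "corners w F = (\<lambda>d. w ! arrive w d) ` F"

definition trigon_typeD :: "nat list \<Rightarrow> (nat \<Rightarrow> bool) \<Rightarrow> (nat \<times> bool) set \<Rightarrow> bool" where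
  "trigon_typeD w eps F \<longleftrightarrow> trigon w eps F \<and> card (corners w F) = 3 \<and>
     (\<forall>a \<in> corners w F. \<forall>b \<in> corners w F. \<not> interlaced w a b)"

definition reducible_word :: "nat list \<Rightarrow> bool" where
  "reducible_word w \<longleftrightarrow> (\<exists>c \<in> set w. \<forall>d. \<not> interlaced w c d)"

text \<open>Inverse-half-twisted splice: writing w = U p A p V, the cyclic word p A p (V U)
becomes rev A @ V @ U.\<close>
definition splice :: "nat list \<Rightarrow> nat \<Rightarrow> nat list" where
  "splice w p =
     (let ks = filter (\<lambda>k. w ! k = p) [0..<length w]; i = ks ! 0; j = ks ! 1 in
      rev (take (j - i - 1) (drop (Suc i) w)) @ drop (Suc j) w @ take i w)"

fun splice_reach :: "nat list \<Rightarrow> nat \<Rightarrow> nat list \<Rightarrow> bool" where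
  "splice_reach w 0 w' = (w' = w)"
| "splice_reach w (Suc k) w' = (\<exists>p \<in> set w. splice_reach (splice w p) k w')"

definition reductivity :: "nat list \<Rightarrow> enat" where
  "reductivity w =
     (if \<exists>k w'. splice_reach w k w' \<and> reducible_word w'
      then enat (LEAST k. \<exists>w'. splice_reach w k w' \<and> reducible_word w')
      else \<infinity>)"

end

theory Submission
  imports Defs
begin

definition good :: "nat list \<Rightarrow> bool" where
  "good w \<longleftrightarrow> (\<forall>c \<in> set w. count_list w c = 2)"

definition alt :: "nat \<Rightarrow> nat \<Rightarrow> nat list \<Rightarrow> bool" where
  "alt a b l \<longleftrightarrow> l = [a,b,a,b] \<or> l = [b,a,b,a]"

abbreviation fl :: "nat \<Rightarrow> nat \<Rightarrow> nat list \<Rightarrow> nat list" where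
  "fl a b l \<equiv> filter (\<lambda>c. c = a \<or> c = b) l"

lemma fl_swap: "fl b a l = fl a b l"
  by (induction l) auto

lemma interlaced_sym: "interlaced w a b = interlaced w b a"
  unfolding interlaced_def by blast

lemma interlaced_mem: "interlaced w a b \<Longrightarrow> a \<in> set w \<and> b \<in> set w"
  unfolding interlaced_def by (auto intro!: nth_mem)

lemma interlaced_irrefl: "\<not> interlaced w a a"
  unfolding interlaced_def by blast

lemma count_seg_pos:
  assumes "m \<le> i" "i < n" "n \<le> length w" "w ! i = c"
  shows "count_list (drop m (take n w)) c \<ge> 1"
proof -
  have "drop m (take n w) ! (i - m) = c" using assms by simp
  moreover have "i - m < length (drop m (take n w))" using assms by simp
  ultimately have "c \<in> set (drop m (take n w))" by (metis nth_mem)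
  then show ?thesis by (metis count_list_0_iff less_one not_le)
qed

lemma seg_app: "m \<le> n \<Longrightarrow> n \<le> k \<Longrightarrow> drop m (take n w) @ drop n (take k w) = drop m (take k w)"
proof -
  assume "m \<le> n" "n \<le> k"
  have t: "take k w = take n w @ drop n (take k w)"
    by (metis \<open>n \<le> k\<close> append_take_drop_id min.absorb1 take_take)
  show ?thesis
  proof (cases "m \<le> length (take n w)")
    case True then show ?thesis by (subst t) simp
  next
    case False then show ?thesis using \<open>m \<le> n\<close> \<open>n \<le> k\<close> by auto
  qed
qed

lemma filter_one:
  assumes "count_list l a = 1" "count_list l b = 0"
  shows "fl a b l = [a]"
proof -
  have "fl a b l = filter (\<lambda>c. c = a) l"
    using assms(2) by (intro filter_cong) (auto simp: count_list_0_iff)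
  also have "\<dots> = replicate (count_list l a) a"
    by (induction l) auto
  finally show ?thesis using assms by simp
qed

lemma alt_of_idx:
  assumes "i1 < j1" "j1 < i2" "i2 < j2" "j2 < length w"
    "w ! i1 = c" "w ! j1 = d" "w ! i2 = c" "w ! j2 = d"
    "count_list w c = 2" "count_list w d = 2" "c \<noteq> d"
  shows "fl c d w = [c,d,c,d]"
proof -
  define s1 where "s1 = drop 0 (take j1 w)"
  define s2 where "s2 = drop j1 (take i2 w)"
  define s3 where "s3 = drop i2 (take j2 w)"
  define s4 where "s4 = drop j2 (take (length w) w)"
  have w: "w = s1 @ s2 @ s3 @ s4"
  proof -
    have "s1 @ s2 = take i2 w" unfolding s1_def s2_def using seg_app[of 0 j1 i2 w] assms by simp
    moreover have "take i2 w @ s3 = take j2 w" unfolding s3_def using seg_app[of 0 i2 j2 w] assms by simp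
    moreover have "take j2 w @ s4 = w" unfolding s4_def by simp
    ultimately show ?thesis by (metis append.assoc)
  qed
  have c1: "count_list s1 c \<ge> 1" unfolding s1_def by (rule count_seg_pos[of _ i1]) (use assms in auto)
  have c2: "count_list s2 d \<ge> 1" unfolding s2_def by (rule count_seg_pos[of _ j1]) (use assms in auto)
  have c3: "count_list s3 c \<ge> 1" unfolding s3_def by (rule count_seg_pos[of _ i2]) (use assms in auto)
  have c4: "count_list s4 d \<ge> 1" unfolding s4_def by (rule count_seg_pos[of _ j2]) (use assms in auto)
  have tc: "count_list s1 c + count_list s2 c + count_list s3 c + count_list s4 c = 2"
    using assms(9) w by (metis count_list_append add.assoc)
  have td: "count_list s1 d + count_list s2 d + count_list s3 d + count_list s4 d = 2"
    using assms(10) w by (metis count_list_append add.assoc)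
  have "fl c d s1 = [c]" by (rule filter_one) (use c1 c3 tc td c2 c4 in linarith)+
  moreover have "fl c d s2 = [d]"
  proof -
    have "fl d c s2 = [d]" by (rule filter_one) (use c1 c3 tc td c2 c4 in linarith)+
    then show ?thesis by (simp add: fl_swap)
  qed
  moreover have "fl c d s3 = [c]" by (rule filter_one) (use c1 c3 tc td c2 c4 in linarith)+
  moreover have "fl c d s4 = [d]"
  proof -
    have "fl d c s4 = [d]" by (rule filter_one) (use c1 c3 tc td c2 c4 in linarith)+
    then show ?thesis by (simp add: fl_swap)
  qed
  ultimately show ?thesis by (subst w) simp
qed

lemma idx_of_fl:
  assumes "fl c d w = [c,d,c,d]"
  shows "\<exists>i1 j1 i2 j2. i1 < j1 \<and> j1 < i2 \<and> i2 < j2 \<and> j2 < length w \<and>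
        w ! i1 = c \<and> w ! j1 = d \<and> w ! i2 = c \<and> w ! j2 = d"
proof -
  obtain u1 r1 where 1: "w = u1 @ c # r1" "fl c d r1 = [d,c,d]"
    using filter_eq_ConsD[OF assms] by (elim exE conjE) simp
  obtain u2 r2 where 2: "r1 = u2 @ d # r2" "fl c d r2 = [c,d]"
    using filter_eq_ConsD[OF 1(2)] by (elim exE conjE) simp
  obtain u3 r3 where 3: "r2 = u3 @ c # r3" "fl c d r3 = [d]"
    using filter_eq_ConsD[OF 2(2)] by (elim exE conjE) simp
  obtain u4 r4 where 4: "r3 = u4 @ d # r4"
    using filter_eq_ConsD[OF 3(2)] by (elim exE conjE) simp
  have w: "w = u1 @ c # u2 @ d # u3 @ c # u4 @ d # r4" using 1 2 3 4 by simp
  show ?thesis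
    apply (rule exI[of _ "length u1"])
    apply (rule exI[of _ "length u1 + 1 + length u2"])
    apply (rule exI[of _ "length u1 + 1 + length u2 + 1 + length u3"])
    apply (rule exI[of _ "length u1 + 1 + length u2 + 1 + length u3 + 1 + length u4"])
    unfolding w by (simp add: nth_append)
qed

lemma interlaced_alt:
  assumes "count_list w a = 2" "count_list w b = 2"
  shows "interlaced w a b \<longleftrightarrow> a \<noteq> b \<and> alt a b (fl a b w)"
proof
  have sw: "fl b a w = fl a b w" by (simp add: fl_swap)
  assume h: "interlaced w a b"
  then have ne: "a \<noteq> b" unfolding interlaced_def by blast
  have "(\<exists>i1 j1 i2 j2. i1 < j1 \<and> j1 < i2 \<and> i2 < j2 \<and> j2 < length w \<and>
        w ! i1 = a \<and> w ! j1 = b \<and> w ! i2 = a \<and> w ! j2 = b) \<or>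
      (\<exists>i1 j1 i2 j2. i1 < j1 \<and> j1 < i2 \<and> i2 < j2 \<and> j2 < length w \<and>
        w ! i1 = b \<and> w ! j1 = a \<and> w ! i2 = b \<and> w ! j2 = a)"
    using h unfolding interlaced_def by blast
  then have "fl a b w = [a,b,a,b] \<or> fl b a w = [b,a,b,a]"
  proof (elim disjE exE conjE)
    fix i1 j1 i2 j2 assume "i1 < j1" "j1 < i2" "i2 < j2" "j2 < length w"
        "w ! i1 = a" "w ! j1 = b" "w ! i2 = a" "w ! j2 = b"
    then have "fl a b w = [a,b,a,b]" using alt_of_idx[of i1 j1 i2 j2 w a b] assms ne by blast
    then show ?thesis ..
  next
    fix i1 j1 i2 j2 assume "i1 < j1" "j1 < i2" "i2 < j2" "j2 < length w"
        "w ! i1 = b" "w ! j1 = a" "w ! i2 = b" "w ! j2 = a"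
    then have "fl b a w = [b,a,b,a]" using alt_of_idx[of i1 j1 i2 j2 w b a] assms ne by blast
    then show ?thesis ..
  qed
  then show "a \<noteq> b \<and> alt a b (fl a b w)" using ne sw unfolding alt_def by auto
next
  have sw: "fl b a w = fl a b w" by (simp add: fl_swap)
  assume "a \<noteq> b \<and> alt a b (fl a b w)"
  then show "interlaced w a b"
    unfolding interlaced_def alt_def using idx_of_fl[of a b w] idx_of_fl[of b a w] sw by auto
qed

lemma decomp:
  assumes "good w" "p \<in> set w"
  shows "\<exists>U A V. w = U @ p # A @ p # V \<and> p \<notin> set U \<and> p \<notin> set A \<and> p \<notin> set V"
proof -
  obtain U r where 1: "w = U @ p # r" "p \<notin> set U" using split_list_first[OF assms(2)] by blast
  have c: "count_list w p = 2" using assms unfolding good_def by blast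
  then have "count_list r p = 1" using 1 by (simp add: count_list_0_iff)
  then have "p \<in> set r" by (metis count_list_0_iff zero_neq_one)
  from split_list_first[OF this] obtain A V where 2: "r = A @ p # V" "p \<notin> set A" by blast
  have "count_list V p = 0" using c 1 2 by (simp add: count_list_0_iff)
  then have "p \<notin> set V" by (simp add: count_list_0_iff)
  then show ?thesis using 1 2 by blast
qed

lemma upt_shift: "[m..<m+n] = map ((+) m) [0..<n]"
  by (induction n) auto

lemma filter_idx_app:
  "filter (\<lambda>k. (xs @ ys) ! k = p) [0..<length (xs @ ys)] =
   filter (\<lambda>k. xs ! k = p) [0..<length xs] @ map ((+) (length xs)) (filter (\<lambda>k. ys ! k = p) [0..<length ys])"
proof -
  have "[0..<length (xs @ ys)] = [0..<length xs] @ map ((+) (length xs)) [0..<length ys]"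
    by (simp add: upt_add_eq_append[of 0] upt_shift)
  moreover have "filter (\<lambda>k. (xs@ys)!k = p) [0..<length xs] = filter (\<lambda>k. xs!k = p) [0..<length xs]"
    by (rule filter_cong) (auto simp: nth_append)
  moreover have "filter (\<lambda>k. (xs@ys)!k = p) (map ((+) (length xs)) [0..<length ys]) =
      map ((+) (length xs)) (filter (\<lambda>k. ys!k = p) [0..<length ys])"
    by (simp add: filter_map o_def nth_append)
  ultimately show ?thesis by simp
qed

lemma filter_idx_none:
  "p \<notin> set xs \<Longrightarrow> filter (\<lambda>k. xs ! k = p) [0..<length xs] = []"
  by (auto simp: filter_empty_conv)

lemma filter_idx_single: "filter (\<lambda>k. [p] ! k = p) [0..<length [p]] = [0]"
  by simp

lemma splice_eq:
  assumes "w = U @ p # A @ p # V" "p \<notin> set U" "p \<notin> set A" "p \<notin> set V"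
  shows "splice w p = rev A @ V @ U"
proof -
  have w': "w = U @ ([p] @ (A @ ([p] @ V)))" using assms by simp
  have ks: "filter (\<lambda>k. w ! k = p) [0..<length w] = [length U, length U + 1 + length A]"
    unfolding w' filter_idx_app filter_idx_single filter_idx_none[OF assms(2)]
      filter_idx_none[OF assms(3)] filter_idx_none[OF assms(4)]
    by simp
  show ?thesis unfolding splice_def Let_def ks using assms(1) by simp
qed

lemma count_splice:
  assumes "good w" "p \<in> set w"
  shows "count_list (splice w p) c = (if c = p then 0 else count_list w c)"
    and "set (splice w p) = set w - {p}"
proof -
  obtain U A V where d: "w = U @ p # A @ p # V" "p \<notin> set U" "p \<notin> set A" "p \<notin> set V"
    using decomp[OF assms] by blast
  have s: "splice w p = rev A @ V @ U" using splice_eq[OF d] .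
  show "count_list (splice w p) c = (if c = p then 0 else count_list w c)"
    unfolding s using d by (auto simp: count_list_0_iff)
  show "set (splice w p) = set w - {p}" unfolding s using d by auto
qed

lemma good_splice:
  assumes "good w" "p \<in> set w"
  shows "good (splice w p)"
  using count_splice[OF assms] assms(1) unfolding good_def by auto

lemma fl_notin: "p \<notin> set X \<Longrightarrow> fl p a X = replicate (count_list X a) a"
  by (induction X) auto

lemma rep_alt:
  assumes "u + m + v = (2::nat)" "a \<noteq> p"
  shows "alt p a (replicate u a @ p # replicate m a @ p # replicate v a) \<longleftrightarrow> m = 1"
proof -
  have u: "u = 0 \<or> u = 1 \<or> u = 2" and m: "m = 0 \<or> m = 1 \<or> m = 2" using assms(1) by linarith+
  have v: "v = 2 - u - m" using assms(1) by linarith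
  show ?thesis using u m assms unfolding v alt_def by (elim disjE) (auto simp: numeral_2_eq_2)
qed

lemma int_p:
  assumes "good w" "w = U @ p # A @ p # V" "p \<notin> set U" "p \<notin> set A" "p \<notin> set V" "a \<noteq> p"
  shows "interlaced w p a \<longleftrightarrow> count_list A a = 1"
proof (cases "a \<in> set w")
  case False
  then have "count_list A a = 0" using assms(2) by (simp add: count_list_0_iff)
  then show ?thesis using False interlaced_mem by auto
next
  case True
  have cp1: "count_list w p = 2" using assms(1,2) unfolding good_def by simp
  have cp2: "count_list w a = 2" using assms(1) True unfolding good_def by blast
  note cp = cp1 cp2
  have e: "fl p a w = replicate (count_list U a) a @ p # replicate (count_list A a) a @ p # replicate (count_list V a) a"
    using assms(2-5) by (simp add: fl_notin)
  have s: "count_list U a + count_list A a + count_list V a = 2" using cp(2) assms(2,6) by simp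
  show ?thesis unfolding interlaced_alt[OF cp] e using rep_alt[OF s assms(6)] assms(6) by auto
qed

lemma alt_rot1: "alt a b (x # l) \<longleftrightarrow> alt a b (l @ [x])"
  unfolding alt_def by (cases l rule: rev_cases) auto

lemma alt_rot: "alt a b (U @ X) \<longleftrightarrow> alt a b (X @ U)"
proof (induction U arbitrary: X)
  case Nil then show ?case by simp
next
  case (Cons x U)
  have "alt a b ((x # U) @ X) = alt a b (U @ X @ [x])" using alt_rot1[of a b x "U @ X"] by simp
  also have "\<dots> = alt a b ((X @ [x]) @ U)" using Cons[of "X @ [x]"] by simp
  finally show ?case by simp
qed

lemma count_filter: "count_list (filter P xs) x = (if P x then count_list xs x else 0)"
  by (induction xs) auto

lemma len_ab: "set xs \<subseteq> {a,b} \<Longrightarrow> a \<noteq> b \<Longrightarrow> length xs = count_list xs a + count_list xs b"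
  by (induction xs) auto

lemma list4:
  assumes "set xs \<subseteq> {a,b}" "length xs = 4"
  shows "\<exists>x1 x2 x3 x4. xs = [x1,x2,x3,x4] \<and> x1 \<in> {a,b} \<and> x2 \<in> {a,b} \<and> x3 \<in> {a,b} \<and> x4 \<in> {a,b}"
proof -
  have "length xs = Suc (Suc (Suc (Suc 0)))" using assms(2) by simp
  then have "\<exists>x1 x2 x3 x4. xs = [x1,x2,x3,x4]" by (auto simp add: length_Suc_conv)
  then obtain x1 x2 x3 x4 where "xs = [x1,x2,x3,x4]" by blast
  then show ?thesis using assms(1) by auto
qed

lemma core4:
  assumes "x1 \<in> {a,b}" "x2 \<in> {a,b}" "x3 \<in> {a,b}" "x4 \<in> {a,b}" "a \<noteq> b"
    "count_list [x1,x2,x3,x4] a = 2" "count_list [x1,x2,x3,x4] b = 2"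
    "k = 0 \<or> k = 1 \<or> k = 2 \<or> k = 3 \<or> k = 4"
  shows "alt a b [x1,x2,x3,x4] \<longleftrightarrow> (alt a b (rev (take k [x1,x2,x3,x4]) @ drop k [x1,x2,x3,x4]) \<noteq>
           (count_list (take k [x1,x2,x3,x4]) a = 1 \<and> count_list (take k [x1,x2,x3,x4]) b = 1))"
  using assms(8)
proof (elim disjE)
  assume "k = 0" then show ?thesis using assms(1-7) by (auto simp: alt_def)
next
  assume "k = 1" then show ?thesis using assms(1-7) by (auto simp: alt_def)
next
  assume "k = 2" then show ?thesis using assms(1-7) by (auto simp: alt_def numeral_2_eq_2)
next
  assume "k = 3" then show ?thesis using assms(1-7) by (auto simp: alt_def numeral_3_eq_3)
next
  assume "k = 4" then show ?thesis using assms(1-7) by (auto simp: alt_def)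
qed

lemma core:
  assumes "set l \<subseteq> {a,b}" "set m \<subseteq> {a,b}" "a \<noteq> b"
    "count_list (l @ m) a = 2" "count_list (l @ m) b = 2"
  shows "alt a b (l @ m) \<longleftrightarrow> (alt a b (rev l @ m) \<noteq> (count_list l a = 1 \<and> count_list l b = 1))"
proof -
  have "length (l @ m) = 4" using len_ab[of "l @ m" a b] assms by simp
  then obtain x1 x2 x3 x4 where x: "l @ m = [x1,x2,x3,x4]" "x1 \<in> {a,b}" "x2 \<in> {a,b}" "x3 \<in> {a,b}" "x4 \<in> {a,b}"
    using list4[of "l @ m" a b] assms(1,2) by auto
  have l: "l = take (length l) [x1,x2,x3,x4]" and m: "m = drop (length l) [x1,x2,x3,x4]"
    using x(1) by (metis append_eq_conv_conj)+
  have k: "length l = 0 \<or> length l = 1 \<or> length l = 2 \<or> length l = 3 \<or> length l = 4"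
  proof -
    have "length l \<le> 4" using \<open>length (l @ m) = 4\<close> by simp
    then show ?thesis by (simp del: length_0_conv) arith
  qed
  have c: "count_list [x1,x2,x3,x4] a = 2" "count_list [x1,x2,x3,x4] b = 2" using assms(4,5) x(1) by auto
  have "alt a b (l @ m) \<longleftrightarrow> alt a b [x1,x2,x3,x4]" using x(1) by simp
  also have "\<dots> \<longleftrightarrow> (alt a b (rev (take (length l) [x1,x2,x3,x4]) @ drop (length l) [x1,x2,x3,x4]) \<noteq>
           (count_list (take (length l) [x1,x2,x3,x4]) a = 1 \<and> count_list (take (length l) [x1,x2,x3,x4]) b = 1))"
    by (rule core4[OF x(2-5) assms(3) c k])
  also have "\<dots> \<longleftrightarrow> (alt a b (rev l @ m) \<noteq> (count_list l a = 1 \<and> count_list l b = 1))"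
    using l m by metis
  finally show ?thesis .
qed

lemma splice_int:
  assumes "good w" "p \<in> set w" "a \<noteq> p" "b \<noteq> p" "a \<noteq> b"
  shows "interlaced (splice w p) a b \<longleftrightarrow> (interlaced w a b \<noteq> (interlaced w p a \<and> interlaced w p b))"
proof -
  obtain U A V where d: "w = U @ p # A @ p # V" "p \<notin> set U" "p \<notin> set A" "p \<notin> set V"
    using decomp[OF assms(1,2)] by blast
  have s: "splice w p = rev A @ V @ U" using splice_eq[OF d] .
  show ?thesis
  proof (cases "a \<in> set w \<and> b \<in> set w")
    case False
    then have "\<not> interlaced (splice w p) a b" using interlaced_mem count_splice(2)[OF assms(1,2)] by blast
    moreover have "\<not> interlaced w a b" using False interlaced_mem by blast
    moreover have "\<not> (interlaced w p a \<and> interlaced w p b)" using False interlaced_mem by blast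
    ultimately show ?thesis by simp
  next
    case True
    have cw: "count_list w a = 2" "count_list w b = 2" using True assms(1) unfolding good_def by auto
    have cs: "count_list (splice w p) a = 2" "count_list (splice w p) b = 2"
      using cw count_splice(1)[OF assms(1,2)] assms(3,4) by auto
    have ipa: "interlaced w p a \<longleftrightarrow> count_list (fl a b A) a = 1"
      using int_p[OF assms(1) d assms(3)] by (simp add: count_filter)
    have ipb: "interlaced w p b \<longleftrightarrow> count_list (fl a b A) b = 1"
      using int_p[OF assms(1) d assms(4)] by (simp add: count_filter)
    have f1: "fl a b w = fl a b U @ fl a b A @ fl a b V" using d(1) assms(3,4) by auto
    have f2: "fl a b (splice w p) = rev (fl a b A) @ (fl a b V @ fl a b U)" unfolding s by (simp add: rev_filter)
    have r: "alt a b (fl a b w) \<longleftrightarrow> alt a b (fl a b A @ (fl a b V @ fl a b U))"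
      unfolding f1 using alt_rot[of a b "fl a b U" "fl a b A @ fl a b V"] by simp
    have ca: "count_list (fl a b A @ (fl a b V @ fl a b U)) a = 2"
      using cw(1) d(1) assms(3) by (simp add: count_filter)
    have cb: "count_list (fl a b A @ (fl a b V @ fl a b U)) b = 2"
      using cw(2) d(1) assms(4) by (simp add: count_filter)
    show ?thesis
      unfolding interlaced_alt[OF cs] interlaced_alt[OF cw] f2 r ipa ipb
      using core[OF _ _ assms(5) ca cb] assms(5) by auto
  qed
qed

lemma red_of_iso: "c \<in> set w \<Longrightarrow> (\<And>d. \<not> interlaced w c d) \<Longrightarrow> reducible_word w"
  unfolding reducible_word_def by blast

lemma sp_facts:
  assumes "good w" "p \<in> set w"
  shows "good (splice w p)" "set (splice w p) = set w - {p}"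
  using good_splice[OF assms] count_splice(2)[OF assms] by auto

lemma L_main:
  assumes g: "good w" and mem: "u \<in> set w" "v \<in> set w" "t \<in> set w"
    and ds: "u \<noteq> v" "u \<noteq> t" "v \<noteq> t"
    and n1: "\<not> interlaced w u v" and n2: "\<not> interlaced w u t" and n3: "\<not> interlaced w v t"
    and par: "\<And>d. interlaced w t d = (interlaced w u d \<noteq> interlaced w v d)"
    and pu: "interlaced w u p" and pv: "interlaced w v p"
  shows "\<exists>k w'. k \<le> 4 \<and> splice_reach w k w' \<and> reducible_word w'"
proof -
  let ?I = "interlaced"
  have pm: "p \<in> set w" using interlaced_mem[OF pu] by blast
  have pnu: "p \<noteq> u" using pu interlaced_irrefl by metis
  have pnv: "p \<noteq> v" using pv interlaced_irrefl by metis
  have ntp: "\<not> ?I w t p" using par[of p] pu pv by simp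
  have pnt: "p \<noteq> t" using pu n2 by metis
  define w1 where "w1 = splice w p"
  have g1: "good w1" and s1: "set w1 = set w - {p}" unfolding w1_def using sp_facts[OF g pm] by auto
  have I1: "?I w1 a b = (?I w a b \<noteq> (?I w p a \<and> ?I w p b))" if "a \<noteq> p" "b \<noteq> p" "a \<noteq> b" for a b
    unfolding w1_def using splice_int[OF g pm that] .
  have f1: "?I w1 u v" using I1[of u v] pnu pnv ds pu pv n1 interlaced_sym by metis
  have f2: "\<not> ?I w1 u t" using I1[of u t] pnu pnt ds n2 ntp interlaced_sym by metis
  have f2': "\<not> ?I w1 v t" using I1[of v t] pnv pnt ds n3 ntp interlaced_sym by metis
  have f3: "?I w1 t d = (?I w1 u d \<noteq> ?I w1 v d)" if "d \<noteq> u" "d \<noteq> v" for d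
  proof (cases "d = p")
    case True
    then have "d \<notin> set w1" using s1 by simp
    then show ?thesis using interlaced_mem by blast
  next
    case False
    show ?thesis
    proof (cases "d = t")
      case True then show ?thesis using f2 f2' interlaced_irrefl by simp
    next
      case dt: False
      have "?I w1 t d = (?I w t d \<noteq> (?I w p t \<and> ?I w p d))" using I1[of t d] False dt pnt by metis
      moreover have "?I w1 u d = (?I w u d \<noteq> (?I w p u \<and> ?I w p d))" using I1[of u d] False that pnu by metis
      moreover have "?I w1 v d = (?I w v d \<noteq> (?I w p v \<and> ?I w p d))" using I1[of v d] False that pnv by metis
      ultimately show ?thesis using par[of d] pu pv ntp interlaced_sym by metis
    qed
  qed
  have vm1: "v \<in> set w1" using s1 mem pnv by auto
  define w2 where "w2 = splice w1 v"
  have g2: "good w2" and s2: "set w2 = set w1 - {v}" unfolding w2_def using sp_facts[OF g1 vm1] by auto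
  have I2: "?I w2 a b = (?I w1 a b \<noteq> (?I w1 v a \<and> ?I w1 v b))" if "a \<noteq> v" "b \<noteq> v" "a \<noteq> b" for a b
    unfolding w2_def using splice_int[OF g1 vm1 that] .
  have e2: "?I w2 u d = ?I w2 t d" for d
  proof -
    consider "d = v" | "d = u" | "d = t" | "d \<noteq> v \<and> d \<noteq> u \<and> d \<noteq> t" by blast
    then show ?thesis
    proof cases
      case 1
      then have "d \<notin> set w2" using s2 by simp
      then show ?thesis using interlaced_mem by blast
    next
      case 2
      have "?I w2 t u = (?I w1 t u \<noteq> (?I w1 v t \<and> ?I w1 v u))" using I2[of t u] ds by metis
      then show ?thesis using 2 f2 f2' interlaced_sym interlaced_irrefl by metis
    next
      case 3
      have "?I w2 u t = (?I w1 u t \<noteq> (?I w1 v u \<and> ?I w1 v t))" using I2[of u t] ds by metis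
      then show ?thesis using 3 f2 f2' interlaced_sym interlaced_irrefl by metis
    next
      case 4
      have "?I w2 u d = (?I w1 u d \<noteq> (?I w1 v u \<and> ?I w1 v d))" using I2[of u d] ds 4 by metis
      moreover have "?I w2 t d = (?I w1 t d \<noteq> (?I w1 v t \<and> ?I w1 v d))" using I2[of t d] ds 4 by metis
      ultimately show ?thesis using f3[of d] 4 f1 f2' interlaced_sym by metis
    qed
  qed
  have tm2: "t \<in> set w2" using s2 s1 mem pnt ds by auto
  have r2: "splice_reach w 2 w2"
    using pm vm1 unfolding w2_def w1_def numeral_2_eq_2 by auto
  show ?thesis
  proof (cases "\<exists>s. ?I w2 t s")
    case False
    then have "reducible_word w2" using red_of_iso[OF tm2] by blast
    then show ?thesis using r2 by (intro exI[of _ 2] exI[of _ w2]) simp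
  next
    case True
    then obtain s where ts: "?I w2 t s" by blast
    have sm2: "s \<in> set w2" using interlaced_mem[OF ts] by blast
    have snt: "s \<noteq> t" using ts interlaced_irrefl by metis
    have snu: "s \<noteq> u" using ts e2[of u] interlaced_irrefl interlaced_sym by metis
    have us: "?I w2 u s" using ts e2 by metis
    define w3 where "w3 = splice w2 s"
    have g3: "good w3" and s3: "set w3 = set w2 - {s}" unfolding w3_def using sp_facts[OF g2 sm2] by auto
    have I3: "?I w3 a b = (?I w2 a b \<noteq> (?I w2 s a \<and> ?I w2 s b))" if "a \<noteq> s" "b \<noteq> s" "a \<noteq> b" for a b
      unfolding w3_def using splice_int[OF g2 sm2 that] .
    have h1: "?I w3 u d = ?I w3 t d" if "d \<noteq> u" "d \<noteq> t" for d
    proof (cases "d = s")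
      case True
      then have "d \<notin> set w3" using s3 by simp
      then show ?thesis using interlaced_mem by blast
    next
      case False
      have "?I w3 u d = (?I w2 u d \<noteq> (?I w2 s u \<and> ?I w2 s d))" using I3[of u d] snu False that by metis
      moreover have "?I w3 t d = (?I w2 t d \<noteq> (?I w2 s t \<and> ?I w2 s d))" using I3[of t d] snt False that by metis
      ultimately show ?thesis using e2[of d] us ts interlaced_sym by metis
    qed
    have h2: "?I w3 t u"
    proof -
      have "?I w3 t u = (?I w2 t u \<noteq> (?I w2 s t \<and> ?I w2 s u))" using I3[of t u] snt snu ds by metis
      moreover have "\<not> ?I w2 t u" using e2[of u] interlaced_irrefl by metis
      ultimately show ?thesis using us ts interlaced_sym by metis
    qed
    have tm3: "t \<in> set w3" using s3 tm2 snt by auto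
    define w4 where "w4 = splice w3 t"
    have s4: "set w4 = set w3 - {t}" unfolding w4_def using sp_facts[OF g3 tm3] by auto
    have I4: "?I w4 a b = (?I w3 a b \<noteq> (?I w3 t a \<and> ?I w3 t b))" if "a \<noteq> t" "b \<noteq> t" "a \<noteq> b" for a b
      unfolding w4_def using splice_int[OF g3 tm3 that] .
    have um4: "u \<in> set w4" using s4 s3 s2 s1 mem pnu ds snu by auto
    have iso: "\<not> ?I w4 u d" for d
    proof -
      consider "d = t" | "d = u" | "d \<noteq> t \<and> d \<noteq> u" by blast
      then show ?thesis
      proof cases
        case 1
        then have "d \<notin> set w4" using s4 by simp
        then show ?thesis using interlaced_mem by blast
      next
        case 2 then show ?thesis using interlaced_irrefl by metis
      next
        case 3
        have "?I w4 u d = (?I w3 u d \<noteq> (?I w3 t u \<and> ?I w3 t d))" using I4[of u d] ds 3 by metis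
        then show ?thesis using h1[of d] h2 3 by metis
      qed
    qed
    have "reducible_word w4" using red_of_iso[OF um4 iso] .
    moreover have "splice_reach w 4 w4"
    proof -
      have "splice_reach w (Suc (Suc (Suc (Suc 0)))) w4"
        using pm vm1 sm2 tm3 unfolding w4_def w3_def w2_def w1_def by auto
      then show ?thesis by (simp add: numeral_eq_Suc)
    qed
    ultimately show ?thesis by (intro exI[of _ 4] exI[of _ w4]) simp
  qed
qed

lemma graph_main:
  assumes g: "good w" and mem: "x \<in> set w" "y \<in> set w" "z \<in> set w"
    and ds: "x \<noteq> y" "x \<noteq> z" "y \<noteq> z"
    and n1: "\<not> interlaced w x y" and n2: "\<not> interlaced w x z" and n3: "\<not> interlaced w y z"
    and par: "\<And>d. interlaced w z d = (interlaced w x d \<noteq> interlaced w y d)"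
  shows "\<exists>k w'. k \<le> 4 \<and> splice_reach w k w' \<and> reducible_word w'"
proof (cases "\<exists>p. interlaced w x p")
  case False
  then have "reducible_word w" using red_of_iso[OF mem(1)] by blast
  then show ?thesis by (intro exI[of _ 0] exI[of _ w]) simp
next
  case True
  then obtain p where xp: "interlaced w x p" by blast
  show ?thesis
  proof (cases "interlaced w y p")
    case True
    show ?thesis by (rule L_main[OF g mem ds n1 n2 n3 par xp True])
  next
    case False
    then have zp: "interlaced w z p" using par[of p] xp by simp
    have par': "\<And>d. interlaced w y d = (interlaced w x d \<noteq> interlaced w z d)"
      using par by blast
    have n3': "\<not> interlaced w z y" using n3 interlaced_sym by metis
    show ?thesis by (rule L_main[OF g mem(1) mem(3) mem(2) ds(2) ds(1) ds(3)[symmetric] n2 n1 n3' par' xp zp])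
  qed
qed

lemma reductivity_le4:
  assumes "\<exists>k w'. k \<le> 4 \<and> splice_reach w k w' \<and> reducible_word w'"
  shows "reductivity w \<le> 4"
proof -
  obtain k w' where k: "k \<le> 4" "splice_reach w k w'" "reducible_word w'" using assms by blast
  have ex: "\<exists>k w'. splice_reach w k w' \<and> reducible_word w'" using k by blast
  have "(LEAST k. \<exists>w'. splice_reach w k w' \<and> reducible_word w') \<le> k"
    by (rule Least_le) (use k in blast)
  then have "(LEAST k. \<exists>w'. splice_reach w k w' \<and> reducible_word w') \<le> 4" using k(1) by linarith
  then show ?thesis unfolding reductivity_def using ex by (simp add: numeral_eq_enat)
qed

lemma count_card: "count_list w c = card {k. k < length w \<and> w ! k = c}"
  unfolding count_list_eq_length_filter length_filter_conv_card
  by (rule arg_cong[where f = card]) auto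

lemma partner_props:
  assumes "good w" "i < length w"
  shows "partner w i < length w" "partner w i \<noteq> i" "w ! partner w i = w ! i"
    "{k. k < length w \<and> w ! k = w ! i} = {i, partner w i}"
proof -
  define S where "S = {k. k < length w \<and> w ! k = w ! i}"
  have "w ! i \<in> set w" using assms(2) by simp
  then have cS: "card S = 2" unfolding S_def using assms(1) count_card[of w "w ! i"] unfolding good_def by simp
  have iS: "i \<in> S" unfolding S_def using assms(2) by simp
  have fS: "finite S" unfolding S_def by simp
  have "card (S - {i}) = 1" using cS iS fS by simp
  then obtain j where j: "S - {i} = {j}" by (rule card_1_singletonE)
  have jS: "j \<in> S" "j \<noteq> i" using j by auto
  have Sij: "S = {i, j}" using j iS by auto
  have pj: "partner w i = j" unfolding partner_def
  proof (rule the_equality)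
    show "j < length w \<and> j \<noteq> i \<and> w ! j = w ! i" using jS unfolding S_def by simp
  next
    fix j' assume "j' < length w \<and> j' \<noteq> i \<and> w ! j' = w ! i"
    then have "j' \<in> S - {i}" unfolding S_def by simp
    then show "j' = j" using j by simp
  qed
  show "partner w i < length w" "partner w i \<noteq> i" "w ! partner w i = w ! i"
    using jS pj unfolding S_def by auto
  show "{k. k < length w \<and> w ! k = w ! i} = {i, partner w i}" using Sij pj unfolding S_def by simp
qed

definition dep :: "nat list \<Rightarrow> nat \<times> bool \<Rightarrow> nat" where
  "dep w d = (if snd d then fst d else Suc (fst d) mod length w)"

lemma arrive_lt: "fst d < length w \<Longrightarrow> arrive w d < length w"
proof -
  assume a: "fst d < length w"
  then have "0 < length w" by linarith
  then show ?thesis using a unfolding arrive_def by auto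
qed

lemma fn_lt:
  assumes "good w" "fst d < length w"
  shows "fst (face_next w eps d) < length w"
proof -
  have "partner w (arrive w d) < length w" using partner_props(1)[OF assms(1) arrive_lt[OF assms(2)]] .
  moreover have "0 < length w" using assms(2) by linarith
  ultimately show ?thesis using assms(2) unfolding face_next_def Let_def by auto
qed

lemma dep_fn:
  assumes "good w" "fst d < length w"
  shows "dep w (face_next w eps d) = partner w (arrive w d)"
proof -
  have q: "partner w (arrive w d) < length w" using partner_props(1)[OF assms(1) arrive_lt[OF assms(2)]] .
  have L: "length w > 0" using assms(2) by linarith
  show ?thesis
  proof (cases "snd d = eps (arrive w d)")
    case True then show ?thesis unfolding face_next_def dep_def Let_def by simp
  next
    case False
    define q' where "q' = partner w (arrive w d)"
    have "Suc ((q' + length w - 1) mod length w) mod length w = q'"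
    proof -
      have "Suc ((q' + length w - 1) mod length w) mod length w = Suc (q' + length w - 1) mod length w"
        by (simp add: mod_Suc_eq)
      also have "Suc (q' + length w - 1) = q' + length w" using L by simp
      also have "(q' + length w) mod length w = q'" using q unfolding q'_def by simp
      finally show ?thesis .
    qed
    then show ?thesis using False unfolding face_next_def dep_def Let_def q'_def by simp
  qed
qed

lemma pair_ad: "{arrive w d, dep w d} = {fst d, Suc (fst d) mod length w}"
  unfolding arrive_def dep_def by auto

lemma pair_even:
  assumes "e < L" "i < j" "j < L" "i \<notin> {e, Suc e mod L}" "j \<notin> {e, Suc e mod L}"
  shows "even (card ({k. i < k \<and> k < j} \<inter> {e, Suc e mod L}))"
proof (cases "Suc e < L")
  case True
  then have m: "Suc e mod L = Suc e" by simp
  show ?thesis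
  proof (cases "i < e \<and> e < j")
    case True
    then have "{k. i < k \<and> k < j} \<inter> {e, Suc e mod L} = {e, Suc e}" using assms m by auto
    then show ?thesis by simp
  next
    case False
    then have "{k. i < k \<and> k < j} \<inter> {e, Suc e mod L} = {}" using assms m by auto
    then show ?thesis by simp
  qed
next
  case False
  then have sl: "Suc e = L" using assms(1) by linarith
  then have m: "Suc e mod L = 0" "e = L - 1" by auto
  then have "{k. i < k \<and> k < j} \<inter> {e, Suc e mod L} = {}" using assms by auto
  then show ?thesis by simp
qed

lemma card3: "card {a, b, c} = 3 \<Longrightarrow> a \<noteq> b \<and> a \<noteq> c \<and> b \<noteq> c"
  by (cases "a = b"; cases "a = c"; cases "b = c") (auto simp: card_insert_if)

lemma orbit3:
  assumes "F = face w eps d0" "card F = 3"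
  defines "d1 \<equiv> face_next w eps d0" and "d2 \<equiv> face_next w eps (face_next w eps d0)"
  shows "F = {d0, d1, d2}" "face_next w eps d2 \<in> F"
proof -
  let ?f = "face_next w eps"
  have F: "F = {(?f ^^ k) d0 | k. True}" using assms(1) unfolding face_def by simp
  have m0: "d0 \<in> F" unfolding F by (auto intro: exI[of _ 0])
  have m1: "d1 \<in> F" unfolding F d1_def by (auto intro!: exI[of _ 1])
  have m2: "d2 \<in> F" unfolding F d2_def by (auto intro!: exI[of _ 2] simp: numeral_2_eq_2)
  have m3: "?f d2 \<in> F" unfolding F d2_def by (auto intro!: exI[of _ 3] simp: numeral_3_eq_3)
  have fin: "finite F" using assms(2) by (metis card.infinite zero_neq_numeral)
  have sub: "(d2 = d0 \<or> d2 = d1) \<Longrightarrow> F \<subseteq> {d0, d1}"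
  proof -
    assume h: "d2 = d0 \<or> d2 = d1"
    have "(?f ^^ k) d0 \<in> {d0, d1}" for k
    proof (induction k)
      case 0 then show ?case by simp
    next
      case (Suc k)
      have A: "(?f ^^ Suc k) d0 = d1" if "(?f ^^ k) d0 = d0" using that by (simp add: d1_def)
      have B: "(?f ^^ Suc k) d0 = d2" if "(?f ^^ k) d0 = d1" using that by (simp add: d1_def d2_def)
      show ?case using A B Suc h by blast
    qed
    then show "F \<subseteq> {d0, d1}" unfolding F by blast
  qed
  have c2: "card {d0, d1} \<le> 2" by (simp add: card_insert_if)
  have nd: "\<not> (d2 = d0 \<or> d2 = d1)"
  proof
    assume h: "d2 = d0 \<or> d2 = d1"
    have "card F \<le> card {d0, d1}" by (rule card_mono) (use sub[OF h] in auto)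
    then show False using c2 assms(2) by linarith
  qed
  then have "d2 \<noteq> d0" "d2 \<noteq> d1" by auto
  moreover have "d1 \<noteq> d0"
  proof
    assume h: "d1 = d0"
    then have "d2 = d0" unfolding d2_def using h unfolding d1_def by simp
    then show False using \<open>d2 \<noteq> d0\<close> by simp
  qed
  ultimately have c3: "card {d0, d1, d2} = 3" by auto
  have "{d0, d1, d2} \<subseteq> F" using m0 m1 m2 by auto
  then show "F = {d0, d1, d2}" using card_subset_eq[OF fin] c3 assms(2) by metis
  show "?f d2 \<in> F" by (rule m3)
qed

lemma cnt3: "x \<noteq> y \<Longrightarrow> x \<noteq> z \<Longrightarrow> y \<noteq> z \<Longrightarrow>
  length (filter (\<lambda>c. c \<in> {x,y,z}) A) = count_list A x + count_list A y + count_list A z"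
  by (induction A) auto

lemma shift_card:
  assumes "w = U @ d # A @ d # V"
  shows "card {k. k < length A \<and> P (A ! k)} =
         card {k. length U < k \<and> k < length U + 1 + length A \<and> P (w ! k)}"
proof -
  let ?S = "{k. k < length A \<and> P (A ! k)}"
  let ?g = "\<lambda>k. k + Suc (length U)"
  have nth: "w ! (k + Suc (length U)) = A ! k" if "k < length A" for k
    using that assms by (simp add: nth_append)
  have "{k. length U < k \<and> k < length U + 1 + length A \<and> P (w ! k)} = ?g ` ?S"
  proof
    show "?g ` ?S \<subseteq> {k. length U < k \<and> k < length U + 1 + length A \<and> P (w ! k)}"
      using nth by auto
  next
    show "{k. length U < k \<and> k < length U + 1 + length A \<and> P (w ! k)} \<subseteq> ?g ` ?S"
    proof
      fix k assume k: "k \<in> {k. length U < k \<and> k < length U + 1 + length A \<and> P (w ! k)}"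
      define k' where "k' = k - Suc (length U)"
      have kk: "k = ?g k'" "k' < length A" using k unfolding k'_def by auto
      then have "P (A ! k')" using k nth[of k'] by simp
      then show "k \<in> ?g ` ?S" using kk by blast
    qed
  qed
  moreover have "inj_on ?g ?S" by (simp add: inj_on_def)
  ultimately show ?thesis by (simp add: card_image)
qed

lemma par_arith:
  assumes "cx \<le> (2::nat)" "cy \<le> 2" "cz \<le> 2" "even (cx + cy + cz)"
  shows "(cz = 1) = ((cx = 1) \<noteq> (cy = 1))"
  using assms by presburger

lemma trigon_struct:
  assumes sc: "spherical_curve w eps" and tD: "trigon_typeD w eps F"
  shows "\<exists>x y z. good w \<and> x \<in> set w \<and> y \<in> set w \<and> z \<in> set w \<and> x \<noteq> y \<and> x \<noteq> z \<and> y \<noteq> z \<and>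
    \<not> interlaced w x y \<and> \<not> interlaced w x z \<and> \<not> interlaced w y z \<and>
    (\<forall>d. interlaced w z d = (interlaced w x d \<noteq> interlaced w y d))"
proof -
  have g: "good w" using sc unfolding spherical_curve_def gauss_word_def good_def by blast
  let ?L = "length w"
  let ?f = "face_next w eps"
  have Ff: "F \<in> faces w eps" "card F = 3" and c3: "card (corners w F) = 3"
    and ni: "\<forall>a \<in> corners w F. \<forall>b \<in> corners w F. \<not> interlaced w a b"
    using tD unfolding trigon_typeD_def trigon_def by auto
  obtain d0 where d0: "d0 \<in> darts w" "F = face w eps d0" using Ff(1) unfolding faces_def by blast
  define d1 where "d1 = ?f d0"
  define d2 where "d2 = ?f d1"
  have F3: "F = {d0, d1, d2}" and fd2: "?f d2 \<in> F"
    using orbit3[OF d0(2) Ff(2)] unfolding d1_def d2_def by auto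
  have l0: "fst d0 < ?L" using d0(1) unfolding darts_def by auto
  have l1: "fst d1 < ?L" unfolding d1_def using fn_lt[OF g l0] .
  have l2: "fst d2 < ?L" unfolding d2_def using fn_lt[OF g l1] .
  define a0 where "a0 = arrive w d0"
  define a1 where "a1 = arrive w d1"
  define a2 where "a2 = arrive w d2"
  have al: "a0 < ?L" "a1 < ?L" "a2 < ?L" unfolding a0_def a1_def a2_def using arrive_lt l0 l1 l2 by auto
  define x where "x = w ! a0"
  define y where "y = w ! a1"
  define z where "z = w ! a2"
  have cor: "corners w F = {x, y, z}" unfolding corners_def F3 x_def y_def z_def a0_def a1_def a2_def by auto
  have "card {x, y, z} = 3" using c3 cor by simp
  then have ds: "x \<noteq> y" "x \<noteq> z" "y \<noteq> z" using card3[of x y z] by blast+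
  have dep1: "dep w d1 = partner w a0" unfolding d1_def a0_def using dep_fn[OF g l0] .
  have dep2: "dep w d2 = partner w a1" unfolding d2_def a1_def using dep_fn[OF g l1] .
  have depf: "dep w (?f d2) = partner w a2" unfolding a2_def using dep_fn[OF g l2] .
  have pp0: "partner w a0 < ?L" "partner w a0 \<noteq> a0" "w ! partner w a0 = x"
    "{k. k < ?L \<and> w ! k = x} = {a0, partner w a0}"
    using partner_props[OF g al(1)] unfolding x_def by auto
  have pp1: "partner w a1 < ?L" "partner w a1 \<noteq> a1" "w ! partner w a1 = y"
    "{k. k < ?L \<and> w ! k = y} = {a1, partner w a1}"
    using partner_props[OF g al(2)] unfolding y_def by auto
  have pp2: "partner w a2 < ?L" "partner w a2 \<noteq> a2" "w ! partner w a2 = z"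
    "{k. k < ?L \<and> w ! k = z} = {a2, partner w a2}"
    using partner_props[OF g al(3)] unfolding z_def by auto
  have f0: "?f d2 = d0"
  proof -
    have "?f d2 \<noteq> d2"
    proof
      assume h: "?f d2 = d2"
      then have "dep w d2 = partner w a2" using depf by simp
      then have "y = z" using dep2 pp1(3) pp2(3) by simp
      then show False using ds by simp
    qed
    moreover have "?f d2 \<noteq> d1"
    proof
      assume h: "?f d2 = d1"
      then have "dep w d1 = partner w a2" using depf by simp
      then have "x = z" using dep1 pp0(3) pp2(3) by simp
      then show False using ds by simp
    qed
    ultimately show ?thesis using fd2 F3 by blast
  qed
  have dep0: "dep w d0 = partner w a2" using depf f0 by simp
  define Q0 where "Q0 = {fst d0, Suc (fst d0) mod ?L}"
  define Q1 where "Q1 = {fst d1, Suc (fst d1) mod ?L}"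
  define Q2 where "Q2 = {fst d2, Suc (fst d2) mod ?L}"
  have Q0: "Q0 = {a0, partner w a2}" unfolding Q0_def a0_def using pair_ad[of w d0] dep0 by simp
  have Q1: "Q1 = {a1, partner w a0}" unfolding Q1_def a1_def using pair_ad[of w d1] dep1 by simp
  have Q2: "Q2 = {a2, partner w a1}" unfolding Q2_def a2_def using pair_ad[of w d2] dep2 by simp
  have lett: "w ! a0 = x" "w ! a1 = y" "w ! a2 = z" unfolding x_def y_def z_def by auto
  have P: "{k. k < ?L \<and> w ! k \<in> {x, y, z}} = Q0 \<union> Q1 \<union> Q2"
  proof -
    have "{k. k < ?L \<and> w ! k \<in> {x, y, z}} =
      {k. k < ?L \<and> w ! k = x} \<union> {k. k < ?L \<and> w ! k = y} \<union> {k. k < ?L \<and> w ! k = z}" by auto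
    also have "\<dots> = Q0 \<union> Q1 \<union> Q2" unfolding pp0(4) pp1(4) pp2(4) Q0 Q1 Q2 by auto
    finally show ?thesis .
  qed
  have disj: "Q0 \<inter> Q1 = {}" "(Q0 \<union> Q1) \<inter> Q2 = {}"
    unfolding Q0 Q1 Q2 using lett pp0(2,3) pp1(2,3) pp2(2,3) ds by auto
  have memx: "x \<in> set w" "y \<in> set w" "z \<in> set w" unfolding x_def y_def z_def using al by auto
  have nint: "\<not> interlaced w x y" "\<not> interlaced w x z" "\<not> interlaced w y z"
    using ni cor by auto
  have par: "interlaced w z d = (interlaced w x d \<noteq> interlaced w y d)" for d
  proof (cases "d \<in> {x, y, z}")
    case True
    then show ?thesis using nint interlaced_sym interlaced_irrefl by (metis insertE singletonD)
  next
    case dn: False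
    show ?thesis
    proof (cases "d \<in> set w")
      case False
      then show ?thesis using interlaced_mem by metis
    next
      case True
      obtain U A V where dc: "w = U @ d # A @ d # V" "d \<notin> set U" "d \<notin> set A" "d \<notin> set V"
        using decomp[OF g True] by blast
      define i where "i = length U"
      define j where "j = length U + 1 + length A"
      have ij: "i < j" "j < ?L" "w ! i = d" "w ! j = d" unfolding i_def j_def using dc(1) by (auto simp: nth_append)
      have Ix: "interlaced w x d = (count_list A x = 1)"
        using int_p[OF g dc, of x] dn interlaced_sym by (metis insertCI)
      have Iy: "interlaced w y d = (count_list A y = 1)"
        using int_p[OF g dc, of y] dn interlaced_sym by (metis insertCI)
      have Iz: "interlaced w z d = (count_list A z = 1)"
        using int_p[OF g dc, of z] dn interlaced_sym by (metis insertCI)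
      have cb: "count_list A a \<le> 2" if "a \<in> set w" for a
      proof -
        have "count_list w a = 2" using g that unfolding good_def by blast
        moreover have "count_list A a \<le> count_list w a" unfolding dc(1) by simp
        ultimately show ?thesis by linarith
      qed
      have iQ: "i \<notin> Q0 \<union> Q1 \<union> Q2" "j \<notin> Q0 \<union> Q1 \<union> Q2"
        using P[symmetric] ij dn by auto
      have e0: "even (card ({k. i < k \<and> k < j} \<inter> Q0))"
        unfolding Q0_def by (rule pair_even[OF l0 ij(1,2)]) (use iQ in \<open>auto simp: Q0_def\<close>)
      have e1: "even (card ({k. i < k \<and> k < j} \<inter> Q1))"
        unfolding Q1_def by (rule pair_even[OF l1 ij(1,2)]) (use iQ in \<open>auto simp: Q1_def\<close>)
      have e2: "even (card ({k. i < k \<and> k < j} \<inter> Q2))"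
        unfolding Q2_def by (rule pair_even[OF l2 ij(1,2)]) (use iQ in \<open>auto simp: Q2_def\<close>)
      let ?S = "{k. i < k \<and> k < j}"
      have fin: "finite Q0" "finite Q1" "finite Q2" unfolding Q0_def Q1_def Q2_def by auto
      have "card (?S \<inter> (Q0 \<union> Q1 \<union> Q2)) = card (?S \<inter> Q0) + card (?S \<inter> Q1) + card (?S \<inter> Q2)"
      proof -
        have "?S \<inter> (Q0 \<union> Q1 \<union> Q2) = ((?S \<inter> Q0) \<union> (?S \<inter> Q1)) \<union> (?S \<inter> Q2)" by auto
        moreover have "card ((?S \<inter> Q0) \<union> (?S \<inter> Q1)) = card (?S \<inter> Q0) + card (?S \<inter> Q1)"
          by (rule card_Un_disjoint) (use fin disj in auto)
        moreover have "card (((?S \<inter> Q0) \<union> (?S \<inter> Q1)) \<union> (?S \<inter> Q2)) =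
            card ((?S \<inter> Q0) \<union> (?S \<inter> Q1)) + card (?S \<inter> Q2)"
          by (rule card_Un_disjoint) (use fin disj in auto)
        ultimately show ?thesis by simp
      qed
      then have ev: "even (card (?S \<inter> (Q0 \<union> Q1 \<union> Q2)))" using e0 e1 e2 by simp
      have "count_list A x + count_list A y + count_list A z = length (filter (\<lambda>c. c \<in> {x,y,z}) A)"
        using cnt3[OF ds] by simp
      also have "\<dots> = card {k. k < length A \<and> A ! k \<in> {x,y,z}}" by (rule length_filter_conv_card)
      also have "\<dots> = card {k. i < k \<and> k < j \<and> w ! k \<in> {x,y,z}}"
        unfolding i_def j_def by (rule shift_card[OF dc(1)])
      also have "{k. i < k \<and> k < j \<and> w ! k \<in> {x,y,z}} = ?S \<inter> (Q0 \<union> Q1 \<union> Q2)"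
        unfolding P[symmetric] using ij(2) by auto
      finally have "even (count_list A x + count_list A y + count_list A z)" using ev by simp
      then show ?thesis unfolding Ix Iy Iz using par_arith cb memx by blast
    qed
  qed
  show ?thesis using g memx ds nint par by blast
qed

theorem mainTheorem7:
  fixes w :: "nat list" and eps :: "nat \<Rightarrow> bool"
  assumes "spherical_curve w eps"
    and "\<exists>F. trigon_typeD w eps F"
  shows "reductivity w \<le> 4"
proof -
  obtain F where F: "trigon_typeD w eps F" using assms(2) by blast
  from trigon_struct[OF assms(1) F] obtain x y z where h: "good w \<and> x \<in> set w \<and> y \<in> set w \<and> z \<in> set w \<and> x \<noteq> y \<and> x \<noteq> z \<and> y \<noteq> z \<and>
    \<not> interlaced w x y \<and> \<not> interlaced w x z \<and> \<not> interlaced w y z \<and>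
    (\<forall>d. interlaced w z d = (interlaced w x d \<noteq> interlaced w y d))" by blast
  have "\<exists>k w'. k \<le> 4 \<and> splice_reach w k w' \<and> reducible_word w'"
    by (rule graph_main[of w x y z]) (use h in simp_all)
  then show ?thesis by (rule reductivity_le4)
qed

end
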